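(* Let $\kappa=[2\ell]$ with $\ell\in\mathbb Z$. Then $g^{(n)}(\kappa)\in\mathbb Z[q,q^{-1}]$ for all $n\ge0$.
   Context: $q$ is an indeterminate, $[n]=\frac{q^n-q^{-n}}{q-q^{-1}}$ for $n\in\mathbb Z$, $[n]!=[1]\cdots[n]$, $[0]!=1$. The polynomials $g_n(x)$ are $g_{2m}(x)=\prod_{i=0}^{m-1}(x^2-[2i]^2)$ and $g_{2m+1}(x)=x\prod_{i=1}^m(x^2-[2i]^2)$, and $g^{(n)}=g_n/[n]!$. *)

theory Defs
  imports "HOL-Computational_Algebra.Formal_Laurent_Series"
begin

text \<open>We work in the field Q((q)) of formal Laurent series over the rationals, which
contains the rational function field Q(q); the indeterminate q is fls_X.
q^n for integer n is fls_X_intpow n.\<close>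

definition qint :: "int \<Rightarrow> rat fls" where
  "qint n = (fls_X_intpow n - fls_X_intpow (- n)) / (fls_X_intpow 1 - fls_X_intpow (- 1))"

definition qfact :: "nat \<Rightarrow> rat fls" where
  "qfact n = (\<Prod>i\<in>{1..n}. qint (int i))"

definition gpoly :: "nat \<Rightarrow> rat fls \<Rightarrow> rat fls" where
  "gpoly n x =
     (if even n then (\<Prod>i\<in>{0..<n div 2}. x^2 - (qint (2 * int i))^2)
      else x * (\<Prod>i\<in>{1..n div 2}. x^2 - (qint (2 * int i))^2))"

definition gdiv :: "nat \<Rightarrow> rat fls \<Rightarrow> rat fls" where
  "gdiv n x = gpoly n x / qfact n"

definition int_laurent_poly :: "rat fls \<Rightarrow> bool" where
  "int_laurent_poly f \<longleftrightarrow> finite {m. fls_nth f m \<noteq> 0} \<and> (\<forall>m. fls_nth f m \<in> \<int>)"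

end

theory Submission
  imports Defs
begin


lemma qint_alt: "qint a = (fls_X powi a - fls_X powi (-a)) / (fls_X powi 1 - fls_X powi (-1))"
  by (simp only: qint_def fls_X_power_int)

lemma X_ne: "(fls_X :: rat fls) \<noteq> 0" by simp

lemma gen_I1:
  fixes q :: "'a::field"
  assumes "q \<noteq> 0" "d \<noteq> 0"
  shows "((q powi a - q powi (-a))/d)^2 - ((q powi b - q powi (-b))/d)^2
        = ((q powi (a-b) - q powi (-(a-b)))/d) * ((q powi (a+b) - q powi (-(a+b)))/d)"
  using assms by (simp add: power_int_diff power_int_add power_int_minus field_simps power2_eq_square)

lemma gen_I3:
  fixes q :: "'a::field"
  assumes "q \<noteq> 0" "d \<noteq> 0"
  shows "(q powi n - q powi (-n))/d = q powi (-k) * ((q powi (n-k) - q powi (-(n-k)))/d)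
      + q powi (n-k) * ((q powi k - q powi (-k))/d)"
  using assms by (simp add: power_int_diff power_int_add power_int_minus field_simps)

lemma gen_I4:
  fixes q :: "'a::field"
  assumes "q \<noteq> 0" "d \<noteq> 0"
  shows "(q powi (a+b) - q powi (-(a+b)))/d + (q powi (a-b) - q powi (-(a-b)))/d
     = ((q powi a - q powi (-a))/d) * (q powi b + q powi (-b))"
  using assms by (simp add: power_int_diff power_int_add power_int_minus field_simps)

lemma gen_I2:
  fixes q :: "'a::field"
  assumes "q \<noteq> 0" "d \<noteq> 0"
  shows "(q powi (2*a) - q powi (-(2*a)))/d = ((q powi a - q powi (-a))/d) * (q powi a + q powi (-a))"
  using assms by (simp add: power_int_diff power_int_add power_int_minus field_simps power_int_mult mult_2)
    (simp add: algebra_simps power2_eq_square power4_eq_xxxx)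


abbreviation qq :: "rat fls" where "qq \<equiv> fls_X"

lemma qp_ne: "qq powi a \<noteq> qq powi b" if "a \<noteq> b"
proof
  assume "qq powi a = qq powi b"
  hence "fls_subdegree (qq powi a) = fls_subdegree (qq powi b)" by simp
  thus False using that by (simp only: fls_X_power_int fls_subdegree_fls_X_intpow)
qed

lemma d_nz: "qq powi 1 - qq powi (-1) \<noteq> 0"
  using qp_ne[of 1 "-1"] by simp

lemma qint_nz: "a \<noteq> 0 \<Longrightarrow> qint a \<noteq> 0"
  using qp_ne[of a "-a"] d_nz by (simp add: qint_alt)

lemma qint_0[simp]: "qint 0 = 0" by (simp add: qint_def)

lemma I1: "qint a ^ 2 - qint b ^ 2 = qint (a-b) * qint (a+b)"
  unfolding qint_alt by (rule gen_I1[OF _ d_nz]) simp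

lemma I3: "qint n = qq powi (-k) * qint (n-k) + qq powi (n-k) * qint k"
  unfolding qint_alt by (rule gen_I3[OF _ d_nz]) simp

lemma I4: "qint (a+b) + qint (a-b) = qint a * (qq powi b + qq powi (-b))"
  unfolding qint_alt by (rule gen_I4[OF _ d_nz]) simp

lemma I2: "qint (2*a) = qint a * (qq powi a + qq powi (-a))"
  unfolding qint_alt by (rule gen_I2[OF _ d_nz]) simp

inductive_set Lp :: "rat fls set" where
  Lp0: "0 \<in> Lp"
| LpX: "qq powi i \<in> Lp"
| LpAdd: "a \<in> Lp \<Longrightarrow> b \<in> Lp \<Longrightarrow> a + b \<in> Lp"
| LpNeg: "a \<in> Lp \<Longrightarrow> - a \<in> Lp"

lemma Lp1: "1 \<in> Lp" using LpX[of 0] by simp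

lemma LpDiff: "a \<in> Lp \<Longrightarrow> b \<in> Lp \<Longrightarrow> a - b \<in> Lp"
  using LpAdd LpNeg by (metis diff_conv_add_uminus)

lemma LpX_mult: "b \<in> Lp \<Longrightarrow> qq powi i * b \<in> Lp"
proof (induction b rule: Lp.induct)
  case Lp0 then show ?case by (simp add: Lp.Lp0)
next
  case (LpX j)
  have "qq powi i * qq powi j = qq powi (i+j)" by (simp only: fls_X_power_int fls_X_intpow_times_fls_X_intpow)
  then show ?case using Lp.LpX[of "i+j"] by metis
next
  case (LpAdd a b) then show ?case using Lp.LpAdd by (simp add: distrib_left)
next
  case (LpNeg a) then show ?case using Lp.LpNeg by simp
qed

lemma LpMult: "a \<in> Lp \<Longrightarrow> b \<in> Lp \<Longrightarrow> a * b \<in> Lp"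
proof (induction a rule: Lp.induct)
  case Lp0 then show ?case by (simp add: Lp.Lp0)
next
  case (LpX j) then show ?case using LpX_mult by simp
next
  case (LpAdd a c) then show ?case using Lp.LpAdd by (simp add: distrib_right)
next
  case (LpNeg a) then show ?case using Lp.LpNeg by simp
qed

lemma LpProd: "(\<And>i. i \<in> A \<Longrightarrow> f i \<in> Lp) \<Longrightarrow> prod f A \<in> Lp"
proof (induction A rule: infinite_finite_induct)
  case (infinite A) then show ?case by (simp add: Lp1)
next
  case empty then show ?case by (simp add: Lp1)
next
  case (insert x F) then show ?case by (simp add: LpMult)
qed

lemma Lp_int: "f \<in> Lp \<Longrightarrow> int_laurent_poly f"
proof (induction f rule: Lp.induct)
  case Lp0 then show ?case by (simp add: int_laurent_poly_def)
next
  case (LpX i)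
  have "{m. fls_nth (qq powi i) m \<noteq> 0} \<subseteq> {i}" by auto
  then show ?case unfolding int_laurent_poly_def
    by (auto intro: finite_subset)
next
  case (LpAdd a b)
  have "{m. fls_nth (a+b) m \<noteq> 0} \<subseteq> {m. fls_nth a m \<noteq> 0} \<union> {m. fls_nth b m \<noteq> 0}" by auto
  with LpAdd show ?case unfolding int_laurent_poly_def
    by (auto intro: finite_subset)
next
  case (LpNeg a) then show ?case unfolding int_laurent_poly_def by auto
qed




definition Nf :: "int \<Rightarrow> nat \<Rightarrow> rat fls" where
  "Nf a k = (\<Prod>j<k. qint (2*(a - int j)))"
definition Df :: "nat \<Rightarrow> rat fls" where
  "Df k = (\<Prod>i\<in>{1..k}. qint (2*int i))"
definition Bf :: "int \<Rightarrow> nat \<Rightarrow> rat fls" where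
  "Bf a k = Nf a k / Df k"
definition Cf :: "nat \<Rightarrow> rat fls" where
  "Cf k = (\<Prod>i\<in>{1..k}. qq powi (int i) + qq powi (- int i))"

lemma Df_nz: "Df k \<noteq> 0"
proof -
  have "\<And>i. i \<ge> 1 \<Longrightarrow> qint (2*int i) \<noteq> 0" by (rule qint_nz) simp
  then show ?thesis unfolding Df_def by (subst prod_zero_iff) auto
qed

lemma Nf_Suc: "Nf a (Suc k) = Nf a k * qint (2*(a - int k))"
  by (simp add: Nf_def)

lemma Nf_shift: "Nf (a+1) (Suc k) = qint (2*(a+1)) * Nf a k"
  unfolding Nf_def prod.lessThan_Suc_shift by simp

lemma Df_Suc: "Df (Suc k) = Df k * qint (2*(int k + 1))"
  by (simp add: Df_def prod.cl_ivl_Suc mult.commute add.commute)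

lemma Nf_0: "Nf 0 (Suc k) = 0"
  unfolding Nf_def prod.lessThan_Suc_shift by simp

lemma field_aux: fixes D c :: "'a::field"
  shows "D \<noteq> 0 \<Longrightarrow> c \<noteq> 0 \<Longrightarrow> (A*r+B*c)*N/(D*c) = A*(N*r/(D*c)) + B*(N/D)"
  by (simp add: field_simps)

lemma Bf_pascal: "Bf (a+1) (Suc k) = qq powi (-(2*(int k+1))) * Bf a (Suc k) + qq powi (2*(a - int k)) * Bf a k"
proof -
  have i3: "qint (2*(a+1)) = qq powi (-(2*(int k+1))) * qint (2*(a+1) - 2*(int k+1)) + qq powi (2*(a+1) - 2*(int k+1)) * qint (2*(int k+1))"
    by (rule I3)
  have e1: "2*(a+1) - 2*(int k+1) = 2*(a - int k)" by simp
  have nz: "qint (2*(int k + 1)) \<noteq> 0" by (rule qint_nz) simp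
  have L: "Bf (a+1) (Suc k) = qint (2*(a+1)) * Nf a k / (Df k * qint (2*(int k+1)))"
    by (simp only: Bf_def Nf_shift Df_Suc)
  have R1: "Bf a (Suc k) = Nf a k * qint (2*(a - int k)) / (Df k * qint (2*(int k+1)))"
    by (simp only: Bf_def Nf_Suc Df_Suc)
  show ?thesis
    unfolding L R1 Bf_def[of a k] i3 e1
    by (rule field_aux[OF Df_nz nz])
qed

lemma Bf_0: "Bf a 0 = 1" by (simp add: Bf_def Nf_def Df_def)

lemma ring_aux: fixes I A X P Y :: "'a::comm_ring_1"
  shows "I*A = 1 \<Longrightarrow> X = I*((A*X + P*Y) - P*Y)"
  by (metis add_diff_cancel mult.assoc mult_1)

lemma Bf_Lp: "Bf a k \<in> Lp"
proof (induction k arbitrary: a)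
  case 0 then show ?case by (simp add: Bf_0 Lp1)
next
  case (Suc k)
  show ?case
  proof (induction a rule: int_induct[where k=0])
    case base then show ?case by (simp add: Bf_def Nf_0 Lp0)
  next
    case (step1 i)
    then show ?case unfolding Bf_pascal by (intro LpAdd LpX_mult Suc.IH)
  next
    case (step2 i)
    have p: "Bf i (Suc k) = qq powi (-(2*(int k+1))) * Bf (i-1) (Suc k) + qq powi (2*(i - 1 - int k)) * Bf (i-1) k"
      using Bf_pascal[of "i-1" k] by simp
    have inv: "qq powi (2*(int k+1)) * qq powi (-(2*(int k+1))) = 1"
      by (simp only: fls_X_power_int fls_X_intpow_times_fls_X_intpow) simp
    have "Bf (i-1) (Suc k) = qq powi (2*(int k+1)) * (Bf i (Suc k) - qq powi (2*(i - 1 - int k)) * Bf (i-1) k)"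
      unfolding p using ring_aux[OF inv] by blast
    moreover have "qq powi (2*(int k+1)) * (Bf i (Suc k) - qq powi (2*(i - 1 - int k)) * Bf (i-1) k) \<in> Lp"
      using step2(2) Suc.IH by (blast intro: LpX_mult LpDiff)
    ultimately show ?case by (simp only:)
  qed
qed

lemma Cf_Lp: "Cf k \<in> Lp"
  unfolding Cf_def by (intro LpProd LpAdd LpX)

lemma Df_eq: "Df k = qfact k * Cf k"
  unfolding Df_def qfact_def Cf_def prod.distrib[symmetric]
  by (rule prod.cong) (simp_all add: I2)

lemma gpoly_odd_Suc: "gpoly (2*Suc m+1) x = gpoly (2*m+1) x * (x^2 - qint (2*(int m+1))^2)"
  by (simp add: gpoly_def add.commute)

lemma gpoly_even: "gpoly (2*m+2) x = x * gpoly (2*m+1) x"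
proof -
  have "{0..<Suc m} = insert 0 {1..m}" by auto
  then show ?thesis by (simp add: gpoly_def power2_eq_square)
qed

lemma gpoly_odd: "gpoly (2*m+1) (qint (2*l)) = Nf (l + int m) (2*m+1)"
proof (induction m)
  case 0 then show ?case by (simp add: gpoly_def Nf_def)
next
  case (Suc m)
  have "Nf (l + int (Suc m)) (2*Suc m+1) = qint (2*(l+int m+1)) * Nf (l + int m) (Suc (2*m+1))"
    using Nf_shift[of "l + int m" "2*m+2"]
    by (simp add: add.assoc del: of_nat_Suc) (simp add: algebra_simps)
  also have "\<dots> = qint (2*(l+int m+1)) * (Nf (l + int m) (2*m+1) * qint (2*(l - int m - 1)))"
    by (simp add: Nf_Suc algebra_simps)
  finally have e: "Nf (l + int (Suc m)) (2*Suc m+1) = qint (2*(l+int m+1)) * (Nf (l + int m) (2*m+1) * qint (2*(l - int m - 1)))" .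
  have i1: "qint (2*l) ^ 2 - qint (2*(int m+1)) ^ 2 = qint (2*(l - int m - 1)) * qint (2*(l+int m+1))"
    using I1[of "2*l" "2*(int m+1)"] by (simp add: algebra_simps)
  show ?case unfolding gpoly_odd_Suc Suc.IH e i1 by (simp add: algebra_simps)
qed


lemma qfact_Cf_nz: "qfact k \<noteq> 0" "Cf k \<noteq> 0"
  using Df_nz[of k] unfolding Df_eq by auto

lemma Cf_Suc: "Cf (Suc k) = Cf k * (qq powi (int k + 1) + qq powi (-(int k + 1)))"
proof -
  have "{1..Suc k} = insert (Suc k) {1..k}" by auto
  moreover have "Suc k \<notin> {1..k}" by simp
  ultimately have "Cf (Suc k) = (qq powi int (Suc k) + qq powi (- int (Suc k))) * Cf k"
    unfolding Cf_def by (simp only:) (rule prod.insert[OF finite_atLeastAtMost])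
  moreover have "int (Suc k) = int k + 1" by simp
  ultimately show ?thesis by (simp only: mult.commute)
qed

lemma field_aux3: fixes N Q C :: "'a::field"
  shows "Q \<noteq> 0 \<Longrightarrow> C \<noteq> 0 \<Longrightarrow> N / Q = N / (Q * C) * C"
  by simp

lemma odd_case: "gdiv (2*m+1) (qint (2*l)) = Bf (l + int m) (2*m+1) * Cf (2*m+1)"
  unfolding gdiv_def gpoly_odd Bf_def Df_eq using qfact_Cf_nz[of "2*m+1"]
  by (rule field_aux3)

lemma field_aux2: fixes Q C s N k :: "'a::field"
  shows "Q \<noteq> 0 \<Longrightarrow> C \<noteq> 0 \<Longrightarrow> s \<noteq> 0 \<Longrightarrow> k * N / Q = C * (N * (k * s) / (Q * (C * s)))"
proof -
  assume a: "Q \<noteq> 0" "C \<noteq> 0" "s \<noteq> 0"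
  have "C * (N * (k * s) / (Q * (C * s))) = (k * N / Q) * ((C * s) / (C * s))"
    by (simp add: ac_simps)
  also have "\<dots> = k * N / Q" using a by simp
  finally show ?thesis by simp
qed

lemma even_case: "gdiv (2*m+2) (qint (2*l)) = Cf (2*m+1) * (Bf (l + int m + 1) (2*m+2) + Bf (l + int m) (2*m+2))"
proof -
  define N where "N = Nf (l + int m) (2*m+1)"
  define s where "s = qq powi (int (2*m+1) + 1) + qq powi (-(int (2*m+1) + 1))"
  have b1: "Bf (l + int m + 1) (2*m+2) = qint (2*(l + int m + 1)) * N / Df (2*m+2)"
    unfolding Bf_def N_def using Nf_shift[of "l + int m" "2*m+1"] by simp
  have b2: "Bf (l + int m) (2*m+2) = N * qint (2*(l - int m - 1)) / Df (2*m+2)"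
    unfolding Bf_def N_def using Nf_Suc[of "l + int m" "2*m+1"] by (simp add: algebra_simps)
  have i4: "qint (2*(l + int m + 1)) + qint (2*(l - int m - 1)) = qint (2*l) * s"
    using I4[of "2*l" "int (2*m+1) + 1"] unfolding s_def by (simp add: algebra_simps)
  have sum: "Bf (l + int m + 1) (2*m+2) + Bf (l + int m) (2*m+2) = N * (qint (2*l) * s) / Df (2*m+2)"
    unfolding b1 b2 i4[symmetric] by (simp add: add_divide_distrib algebra_simps)
  have df: "Df (2*m+2) = qfact (2*m+2) * (Cf (2*m+1) * s)"
    unfolding Df_eq s_def using Cf_Suc[of "2*m+1"] by simp
  have snz: "s \<noteq> 0" using qfact_Cf_nz(2)[of "Suc (2*m+1)"] Cf_Suc[of "2*m+1"] unfolding s_def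
    by (metis mult_zero_right)
  show ?thesis
    unfolding gdiv_def gpoly_even gpoly_odd sum df N_def[symmetric]
    by (rule field_aux2[OF qfact_Cf_nz(1) qfact_Cf_nz(2) snz])
qed

theorem lemma2p5:
  fixes l :: int and n :: nat
  shows "int_laurent_poly (gdiv n (qint (2 * l)))"
proof (rule Lp_int)
  have "n = 0 \<or> (\<exists>m. n = 2*m+1) \<or> (\<exists>m. n = 2*m+2)" by presburger
  then consider "n = 0" | m where "n = 2*m+1" | m where "n = 2*m+2" by blast
  then show "gdiv n (qint (2 * l)) \<in> Lp"
  proof cases
    case 1 then show ?thesis by (simp add: gdiv_def gpoly_def qfact_def Lp1)
  next
    case (2 m) then show ?thesis unfolding 2 odd_case by (intro LpMult Bf_Lp Cf_Lp)
  next
    case (3 m) then show ?thesis unfolding 3 even_case by (intro LpMult LpAdd Bf_Lp Cf_Lp)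
  qed
qed

end
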